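(* Let $\mathcal A\subset\mathbb R^n$ be compact with diameter $D_{\mathcal A}<\infty$, let $\mathcal X=\mathrm{conv}(\mathcal A)$, let $f$ have $L$-Lipschitz gradient, and let $\eta>1$. Run the AC-FW algorithm with the closed-loop Frank-Wolfe subroutine and a damping sequence satisfying Condition (D), with $L_0>0$. Then the subroutine satisfies parts (i) and (ii) of Condition (S); more precisely, for every $t\ge0$, $$|\mathcal G\cap\mathcal I_\eta\cap[t]|\ge t+1-\left\lfloor\log_\eta\!\left(\frac{L}{rL_0}\right)\right\rfloor.$$ If additionally $f$ is convex, then part (iii) of Condition (S) holds with $R=1$.
   Context: $D_{\mathcal A}:=\sup_{x,y\in\mathcal A}\|x-y\|_2$; $f:\mathbb R^n\to\mathbb R$ is differentiable with $\|\nabla f(x)-\nabla f(y)\|_2\le L\|x-y\|_2$. $x^\star$ is an optimal solution of $\min_{x\in\mathcal X}f(x)$. For $x\ne y$, $\ell(x,y):=2|f(y)-f(x)-\nabla f(x)^\top(y-x)|/\|y-x\|_2^2$, $\ell(x,x):=0$. AC-FW algorithm: given $\{r_t\}_{t\ge0}$ and a subroutine, pick $x_{-1}\in\mathcal A$, $x_0\in\arg\min_{v\in\mathcal A}\nabla f(x_{-1})^\top v$, $L_0:=\ell(x_{-1},x_0)$. For $t=0,1,\dots$: $v_t\in\arg\min_{v\in\mathcal A}\nabla f(x_t)^\top v$; the subroutine returns $(d_t,\gamma_t^{\max})$; $\gamma_t:=\min\{\nabla f(x_t)^\top d_t/(L_t\|d_t\|_2^2),\gamma_t^{\max}\}$;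 $\bar x_{t+1}:=x_t-\gamma_td_t$; $L_{t+1}:=\max\{\ell(x_t,\bar x_{t+1}),r_tL_t\}$; $x_{t+1}:=\bar x_{t+1}$ if $f(\bar x_{t+1})<f(x_t)$, else $x_{t+1}:=x_t$. Closed-loop Frank-Wolfe subroutine: $d_t:=x_t-v_t$, $\gamma_t^{\max}:=1$. $[t]:=\{0,\dots,t\}$; $\mathcal I_\eta:=\{t\ge0:L_{t+1}\le\eta L_t\}$; $\mathcal G:=\{t\ge0:\gamma_t^{\max}\ge1\text{ or }\gamma_t<\gamma_t^{\max}\}$. Condition (D): $r_t\in(0,1]$ for all $t$ and $r:=\prod_{t\ge0}r_t\in(0,1]$. Condition (S): for all $t\ge0$: (i) $\|d_t\|_2\le D_{\mathcal A}$ and $x_t-\gamma d_t\in\mathcal X$ for all $\gamma\in[0,\gamma_t^{\max}]$; (ii) $\mathcal G$ is infinite; (iii) if $f$ is convex, there is $R\ge1$ independent of $t$ with $\nabla f(x_t)^\top d_t\ge(f(x_t)-f(x^\star))/R$. *)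

theory Defs
  imports "HOL-Analysis.Analysis"
begin

definition ell :: "('a::euclidean_space \<Rightarrow> real) \<Rightarrow> ('a \<Rightarrow> 'a) \<Rightarrow> 'a \<Rightarrow> 'a \<Rightarrow> real" where
  "ell f g x y = (if x = y then 0
     else 2 * \<bar>f y - f x - g x \<bullet> (y - x)\<bar> / (norm (y - x))\<^sup>2)"

text \<open>A run of AC-FW with the closed-loop Frank-Wolfe subroutine, with damping
  sequence r, initial point xm1 (= x_{-1}), iterates x, FW vertices v, directions d,
  maximal step sizes gmax, step sizes gam, curvature estimates Lc, trial points xbar.\<close>
definition acfw_cl_run ::
  "'a::euclidean_space set \<Rightarrow> ('a \<Rightarrow> real) \<Rightarrow> ('a \<Rightarrow> 'a) \<Rightarrow> (nat \<Rightarrow> real) \<Rightarrow> 'a \<Rightarrow>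
   (nat \<Rightarrow> 'a) \<Rightarrow> (nat \<Rightarrow> 'a) \<Rightarrow> (nat \<Rightarrow> 'a) \<Rightarrow> (nat \<Rightarrow> real) \<Rightarrow> (nat \<Rightarrow> real) \<Rightarrow>
   (nat \<Rightarrow> real) \<Rightarrow> (nat \<Rightarrow> 'a) \<Rightarrow> bool" where
  "acfw_cl_run A f g r xm1 x v d gmax gam Lc xbar \<longleftrightarrow>
     xm1 \<in> A \<and>
     x 0 \<in> A \<and> (\<forall>u\<in>A. g xm1 \<bullet> x 0 \<le> g xm1 \<bullet> u) \<and>
     Lc 0 = ell f g xm1 (x 0) \<and>
     (\<forall>t. v t \<in> A \<and> (\<forall>u\<in>A. g (x t) \<bullet> v t \<le> g (x t) \<bullet> u)) \<and>
     (\<forall>t. d t = x t - v t \<and> gmax t = 1) \<and>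
     (\<forall>t. gam t = min (g (x t) \<bullet> d t / (Lc t * (norm (d t))\<^sup>2)) (gmax t)) \<and>
     (\<forall>t. xbar (Suc t) = x t - gam t *\<^sub>R d t) \<and>
     (\<forall>t. Lc (Suc t) = max (ell f g (x t) (xbar (Suc t))) (r t * Lc t)) \<and>
     (\<forall>t. x (Suc t) = (if f (xbar (Suc t)) < f (x t) then xbar (Suc t) else x t))"

definition I_eta :: "real \<Rightarrow> (nat \<Rightarrow> real) \<Rightarrow> nat set" where
  "I_eta \<eta> Lc = {t. Lc (Suc t) \<le> \<eta> * Lc t}"

definition G_set :: "(nat \<Rightarrow> real) \<Rightarrow> (nat \<Rightarrow> real) \<Rightarrow> nat set" where
  "G_set gmax gam = {t. gmax t \<ge> 1 \<or> gam t < gmax t}"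

end

theory Submission
  imports Defs
begin

lemma line_deriv:
  fixes f :: "'a::euclidean_space \<Rightarrow> real"
  assumes grad: "\<And>y. (f has_derivative (\<lambda>h. g y \<bullet> h)) (at y)"
  shows "((\<lambda>s. f (x + s *\<^sub>R h)) has_real_derivative (g (x + s *\<^sub>R h) \<bullet> h)) (at s)"
proof -
  have i: "((\<lambda>s. x + s *\<^sub>R h) has_derivative (\<lambda>t. t *\<^sub>R h)) (at s)"
    by (auto intro!: derivative_eq_intros)
  have "((f \<circ> (\<lambda>s. x + s *\<^sub>R h)) has_derivative ((\<lambda>k. g (x + s *\<^sub>R h) \<bullet> k) \<circ> (\<lambda>t. t *\<^sub>R h))) (at s)"
    by (rule diff_chain_at[OF i grad])
  moreover have "((\<lambda>k. g (x + s *\<^sub>R h) \<bullet> k) \<circ> (\<lambda>t. t *\<^sub>R h)) = (\<lambda>t. (g (x + s *\<^sub>R h) \<bullet> h) * t)"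
    by (auto simp: fun_eq_iff)
  ultimately show ?thesis
    by (simp add: has_field_derivative_def o_def)
qed

lemma ell_le:
  fixes f :: "'a::euclidean_space \<Rightarrow> real"
  assumes grad: "\<And>y. (f has_derivative (\<lambda>h. g y \<bullet> h)) (at y)"
    and lip: "\<And>y z. norm (g y - g z) \<le> L * norm (y - z)"
  shows "ell f g x y \<le> L"
proof (cases "x = y")
  case True
  obtain b :: 'a where b: "b \<in> Basis" using nonempty_Basis by blast
  then have nb: "norm b = 1" by simp
  have "0 \<le> L"
  proof -
    have "0 \<le> norm (g b - g 0)" by simp
    also have "\<dots> \<le> L * norm (b - 0)" by (rule lip)
    finally show ?thesis using nb by simp
  qed
  then show ?thesis using True by (simp add: ell_def)
next
  case False
  define h where "h = y - x"
  have hp: "norm h > 0" using False by (simp add: h_def)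
  define \<phi> where "\<phi> s = f (x + s *\<^sub>R h) - s * (g x \<bullet> h)" for s
  have dphi: "(\<phi> has_real_derivative ((g (x + s *\<^sub>R h) - g x) \<bullet> h)) (at s)" for s
    unfolding \<phi>_def
    by (auto intro!: derivative_eq_intros line_deriv[OF grad] simp: inner_diff_left)
  have bnd: "\<bar>(g (x + s *\<^sub>R h) - g x) \<bullet> h\<bar> \<le> L * s * (norm h)^2" if "0 \<le> s" for s
  proof -
    have "\<bar>(g (x + s *\<^sub>R h) - g x) \<bullet> h\<bar> \<le> norm (g (x + s *\<^sub>R h) - g x) * norm h"
      by (rule Cauchy_Schwarz_ineq2)
    also have "\<dots> \<le> (L * norm (s *\<^sub>R h)) * norm h"
      using lip[of "x + s *\<^sub>R h" x] by (intro mult_right_mono) auto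
    finally show ?thesis using that by (simp add: power2_eq_square)
  qed
  define c where "c = L / 2 * (norm h)^2"
  have up: "\<phi> 1 - c \<le> \<phi> 0 - 0"
  proof -
    have "(\<lambda>s. \<phi> s - c * s^2) 1 \<le> (\<lambda>s. \<phi> s - c * s^2) 0"
    proof (rule DERIV_nonpos_imp_nonincreasing[where f="\<lambda>s. \<phi> s - c * s^2"])
      fix s :: real assume s: "0 \<le> s" "s \<le> 1"
      have d2: "((\<lambda>s. c * s^2) has_real_derivative c * (2 * s)) (at s)"
        by (auto intro!: derivative_eq_intros)
      have "(g (x + s *\<^sub>R h) - g x) \<bullet> h - c * (2 * s) \<le> 0"
        using bnd[OF s(1)] by (auto simp: c_def abs_le_iff algebra_simps)
      then show "\<exists>y. ((\<lambda>s. \<phi> s - c * s^2) has_real_derivative y) (at s) \<and> y \<le> 0"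
        using DERIV_diff[OF dphi d2] by blast
    qed simp
    then show ?thesis by simp
  qed
  have lo: "\<phi> 0 - 0 \<le> \<phi> 1 + c"
  proof -
    have "(\<lambda>s. \<phi> s + c * s^2) 0 \<le> (\<lambda>s. \<phi> s + c * s^2) 1"
    proof (rule DERIV_nonneg_imp_nondecreasing[where f="\<lambda>s. \<phi> s + c * s^2"])
      fix s :: real assume s: "0 \<le> s" "s \<le> 1"
      have d2: "((\<lambda>s. c * s^2) has_real_derivative c * (2 * s)) (at s)"
        by (auto intro!: derivative_eq_intros)
      have "(g (x + s *\<^sub>R h) - g x) \<bullet> h + c * (2 * s) \<ge> 0"
        using bnd[OF s(1)] by (auto simp: c_def abs_le_iff algebra_simps)
      then show "\<exists>y. ((\<lambda>s. \<phi> s + c * s^2) has_real_derivative y) (at s) \<and> y \<ge> 0"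
        using DERIV_add[OF dphi d2] by blast
    qed simp
    then show ?thesis by simp
  qed
  have "\<bar>f y - f x - g x \<bullet> (y - x)\<bar> \<le> c"
    using up lo by (simp add: \<phi>_def h_def abs_le_iff)
  then show ?thesis using False hp
    by (simp add: ell_def h_def c_def divide_le_eq)
qed

theorem lemma5:
  fixes A :: "'a::euclidean_space set" and f :: "'a \<Rightarrow> real" and g :: "'a \<Rightarrow> 'a"
    and L \<eta> rr :: real and r :: "nat \<Rightarrow> real" and xm1 xstar :: 'a
    and x v d xbar :: "nat \<Rightarrow> 'a" and gmax gam Lc :: "nat \<Rightarrow> real"
  assumes "compact A"
    and grad: "\<And>y. (f has_derivative (\<lambda>h. g y \<bullet> h)) (at y)"
    and lip: "\<And>y z. norm (g y - g z) \<le> L * norm (y - z)"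
    and "\<eta> > 1"
    and D1: "\<And>t. 0 < r t \<and> r t \<le> 1"
    and D2: "(\<lambda>T. \<Prod>t<T. r t) \<longlonglongrightarrow> rr" and D3: "0 < rr"
    and run: "acfw_cl_run A f g r xm1 x v d gmax gam Lc xbar"
    and L0: "Lc 0 > 0"
    and opt: "xstar \<in> convex hull A" "\<And>y. y \<in> convex hull A \<Longrightarrow> f xstar \<le> f y"
  shows "(\<forall>t. norm (d t) \<le> diameter A \<and>
              (\<forall>\<gamma>\<in>{0..gmax t}. x t - \<gamma> *\<^sub>R d t \<in> convex hull A))
       \<and> infinite (G_set gmax gam)
       \<and> (\<forall>t. real (card (G_set gmax gam \<inter> I_eta \<eta> Lc \<inter> {0..t}))
                \<ge> real t + 1 - of_int \<lfloor>log \<eta> (L / (rr * Lc 0))\<rfloor>)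
       \<and> (convex_on UNIV f \<longrightarrow> (\<forall>t. g (x t) \<bullet> d t \<ge> (f (x t) - f xstar) / 1))"
  proof -
  note R = run[unfolded acfw_cl_run_def]
  have xm1A: "xm1 \<in> A" and x0A: "x 0 \<in> A" and Lc0: "Lc 0 = ell f g xm1 (x 0)"
    using R by auto
  have vA: "v t \<in> A" and vmin: "\<And>u. u \<in> A \<Longrightarrow> g (x t) \<bullet> v t \<le> g (x t) \<bullet> u" for t
    using R by auto
  have dd: "d t = x t - v t" and gm: "gmax t = 1" for t using R by auto
  have gamd: "gam t = min (g (x t) \<bullet> d t / (Lc t * (norm (d t))\<^sup>2)) (gmax t)" for t using R by auto
  have xbd: "xbar (Suc t) = x t - gam t *\<^sub>R d t" for t using R by auto
  have Lcs: "Lc (Suc t) = max (ell f g (x t) (xbar (Suc t))) (r t * Lc t)" for t using R by auto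
  have xs: "x (Suc t) = (if f (xbar (Suc t)) < f (x t) then xbar (Suc t) else x t)" for t
    using R by auto
  have vminh: "g (x t) \<bullet> v t \<le> g (x t) \<bullet> y" if "y \<in> convex hull A" for t y
  proof -
    have "convex hull A \<subseteq> {y. g (x t) \<bullet> y \<ge> g (x t) \<bullet> v t}"
      by (rule hull_minimal) (auto intro: vmin convex_halfspace_ge)
    then show ?thesis using that by auto
  qed
  have Lpos: "Lc t > 0" for t
  proof (induction t)
    case 0 then show ?case using L0 by simp
  next
    case (Suc t)
    have "r t * Lc t > 0" using D1[of t] Suc by simp
    then show ?case by (simp add: Lcs)
  qed
  have LcL: "Lc t \<le> L" for t
  proof (induction t)
    case 0 then show ?case using Lc0 ell_le[OF grad lip] by simp
  next
    case (Suc t)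
    have "r t * Lc t \<le> 1 * L" using D1[of t] Suc Lpos[of t]
      by (intro mult_mono) auto
    then show ?case using ell_le[OF grad lip] by (simp add: Lcs)
  qed
  have seg: "x t - \<gamma> *\<^sub>R d t \<in> convex hull A" if "x t \<in> convex hull A" "0 \<le> \<gamma>" "\<gamma> \<le> 1" for t \<gamma>
  proof -
    have eq: "x t - \<gamma> *\<^sub>R d t = (1 - \<gamma>) *\<^sub>R x t + \<gamma> *\<^sub>R v t"
      by (simp add: dd algebra_simps)
    have vin: "v t \<in> convex hull A" using vA by (rule hull_inc)
    have "(1 - \<gamma>) *\<^sub>R x t + \<gamma> *\<^sub>R v t \<in> convex hull A"
      by (rule convexD[OF convex_convex_hull]) (use that vin in auto)
    then show ?thesis by (simp only: eq)
  qed
  have xin: "x t \<in> convex hull A" for t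
  proof (induction t)
    case 0 then show ?case using x0A by (rule hull_inc)
  next
    case (Suc t)
    have "g (x t) \<bullet> d t \<ge> 0" using vminh[OF Suc] by (simp add: dd inner_diff_right)
    then have "g (x t) \<bullet> d t / (Lc t * (norm (d t))\<^sup>2) \<ge> 0" using Lpos[of t] by simp
    then have "0 \<le> gam t" "gam t \<le> 1" by (auto simp: gamd gm)
    then have "xbar (Suc t) \<in> convex hull A" using seg[OF Suc] by (simp add: xbd)
    then show ?case using Suc by (simp add: xs)
  qed
  have bA: "bounded A" using \<open>compact A\<close> by (rule compact_imp_bounded)
  have P1: "\<forall>t. norm (d t) \<le> diameter A \<and>
              (\<forall>\<gamma>\<in>{0..gmax t}. x t - \<gamma> *\<^sub>R d t \<in> convex hull A)"
  proof (intro allI conjI ballI)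
    fix t
    have "A \<subseteq> cball (v t) (diameter A)"
      using diameter_bounded_bound[OF bA vA[of t]] by (auto simp: mem_cball)
    then have "convex hull A \<subseteq> cball (v t) (diameter A)"
      by (rule hull_minimal) (rule convex_cball)
    then show "norm (d t) \<le> diameter A" using xin[of t]
      by (auto simp: dd mem_cball dist_norm norm_minus_commute)
    fix \<gamma> assume "\<gamma> \<in> {0..gmax t}"
    then show "x t - \<gamma> *\<^sub>R d t \<in> convex hull A" using seg[OF xin[of t]] by (simp add: gm)
  qed
  have GU: "G_set gmax gam = UNIV" by (auto simp: G_set_def gm)
  have prodge: "rr \<le> (\<Prod>s<n. r s)" for n
  proof (rule decseq_ge[OF _ D2])
    show "decseq (\<lambda>T. \<Prod>t<T. r t)"
    proof (rule decseq_SucI)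
      fix n
      have "(\<Prod>t<n. r t) \<ge> 0" using D1 by (intro prod_nonneg) (auto intro: less_imp_le)
      then show "(\<Prod>t<Suc n. r t) \<le> (\<Prod>t<n. r t)"
        using D1[of n] by (simp add: mult_left_le)
    qed
  qed
  define K where "K n = card {s\<in>{..<n}. s \<notin> I_eta \<eta> Lc}" for n
  have grow: "Lc n \<ge> \<eta> ^ K n * (\<Prod>s<n. r s) * Lc 0" for n
  proof (induction n)
    case 0 then show ?case by (simp add: K_def)
  next
    case (Suc n)
    have pn: "(\<Prod>s<n. r s) \<ge> 0" using D1 by (intro prod_nonneg) (auto intro: less_imp_le)
    have ep: "\<eta> ^ K n > 0" using \<open>\<eta> > 1\<close> by simp
    have Lge: "Lc (Suc n) \<ge> r n * Lc n" by (simp add: Lcs)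
    show ?case
    proof (cases "n \<in> I_eta \<eta> Lc")
      case True
      then have "K (Suc n) = K n" unfolding K_def by (auto simp: lessThan_Suc intro!: arg_cong[where f=card])
      moreover have "r n * (\<eta> ^ K n * (\<Prod>s<n. r s) * Lc 0) \<le> r n * Lc n"
        using Suc D1[of n] by (intro mult_left_mono) auto
      ultimately show ?thesis using Lge by (simp add: algebra_simps)
    next
      case False
      have fin: "finite {s\<in>{..<n}. s \<notin> I_eta \<eta> Lc}" by simp
      have "{s\<in>{..<Suc n}. s \<notin> I_eta \<eta> Lc} = insert n {s\<in>{..<n}. s \<notin> I_eta \<eta> Lc}"
        using False by auto
      then have "K (Suc n) = Suc (K n)" unfolding K_def by (simp add: card_insert_if)
      moreover have "Lc (Suc n) > \<eta> * Lc n" using False by (simp add: I_eta_def)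
      moreover have "\<eta> * (r n * (\<eta> ^ K n * (\<Prod>s<n. r s) * Lc 0)) \<le> \<eta> * (1 * (\<eta> ^ K n * (\<Prod>s<n. r s) * Lc 0))"
        using D1[of n] ep pn L0 \<open>\<eta> > 1\<close> by (intro mult_left_mono mult_right_mono) auto
      moreover have "\<eta> * (\<eta> ^ K n * (\<Prod>s<n. r s) * Lc 0) \<le> \<eta> * Lc n"
        using Suc \<open>\<eta> > 1\<close> by (intro mult_left_mono) auto
      ultimately show ?thesis by (simp add: algebra_simps)
    qed
  qed
  have P3: "real (card (G_set gmax gam \<inter> I_eta \<eta> Lc \<inter> {0..t}))
                \<ge> real t + 1 - of_int \<lfloor>log \<eta> (L / (rr * Lc 0))\<rfloor>" for t
  proof -
    let ?n = "Suc t"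
    have ep: "\<eta> ^ K ?n > 0" using \<open>\<eta> > 1\<close> by simp
    have "\<eta> ^ K ?n * rr * Lc 0 \<le> \<eta> ^ K ?n * (\<Prod>s<?n. r s) * Lc 0"
      using prodge[of ?n] ep L0 by (intro mult_right_mono mult_left_mono) auto
    also have "\<dots> \<le> L" using grow[of ?n] LcL[of ?n] by linarith
    finally have "\<eta> ^ K ?n \<le> L / (rr * Lc 0)" using D3 L0 by (simp add: field_simps)
    moreover have "L / (rr * Lc 0) > 0" using D3 L0 LcL[of 0] by simp
    ultimately have "real (K ?n) \<le> log \<eta> (L / (rr * Lc 0))"
      using \<open>\<eta> > 1\<close> by (simp add: le_log_iff powr_realpow)
    then have Kf: "int (K ?n) \<le> \<lfloor>log \<eta> (L / (rr * Lc 0))\<rfloor>"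
      by (simp add: le_floor_iff)
    have "{0..t} = (I_eta \<eta> Lc \<inter> {0..t}) \<union> {s\<in>{..<?n}. s \<notin> I_eta \<eta> Lc}" by auto
    moreover have "card ((I_eta \<eta> Lc \<inter> {0..t}) \<union> {s\<in>{..<?n}. s \<notin> I_eta \<eta> Lc})
        = card (I_eta \<eta> Lc \<inter> {0..t}) + card {s\<in>{..<?n}. s \<notin> I_eta \<eta> Lc}"
      by (rule card_Un_disjoint) auto
    ultimately have "card {0..t} = card (I_eta \<eta> Lc \<inter> {0..t}) + K ?n"
      unfolding K_def by simp
    then have "card (I_eta \<eta> Lc \<inter> {0..t}) = t + 1 - K ?n" by simp
    moreover have "K ?n \<le> t + 1" using \<open>card {0..t} = _\<close> by simp
    ultimately have "real (card (I_eta \<eta> Lc \<inter> {0..t})) = real t + 1 - real (K ?n)" by simp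
    moreover have "real (K ?n) \<le> of_int \<lfloor>log \<eta> (L / (rr * Lc 0))\<rfloor>"
      using Kf by (metis of_int_le_iff of_int_of_nat_eq)
    moreover have GI: "G_set gmax gam \<inter> I_eta \<eta> Lc \<inter> {0..t} = I_eta \<eta> Lc \<inter> {0..t}"
      using GU by simp
    ultimately show ?thesis unfolding GI by linarith
  qed
  have P4: "convex_on UNIV f \<longrightarrow> (\<forall>t. g (x t) \<bullet> d t \<ge> (f (x t) - f xstar) / 1)"
  proof (intro impI allI)
    assume cv: "convex_on UNIV f"
    fix t
    define h where "h = xstar - x t"
    define \<phi> where "\<phi> s = f (x t + s *\<^sub>R h)" for s
    have "convex_on UNIV \<phi>"
    proof (rule convex_onI)
      fix s a b :: real assume s: "0 < s" "s < 1"
      have eq: "x t + ((1-s) *\<^sub>R a + s *\<^sub>R b) *\<^sub>R h = (1-s) *\<^sub>R (x t + a *\<^sub>R h) + s *\<^sub>R (x t + b *\<^sub>R h)"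
        by (simp add: algebra_simps)
      show "\<phi> ((1-s) *\<^sub>R a + s *\<^sub>R b) \<le> (1-s) * \<phi> a + s * \<phi> b"
        unfolding \<phi>_def eq using convex_onD[OF cv, of s "x t + a *\<^sub>R h" "x t + b *\<^sub>R h"] s by simp
    qed simp
    then have "\<phi> 1 - \<phi> 0 \<ge> (g (x t + 0 *\<^sub>R h) \<bullet> h) * (1 - 0)"
    proof (rule convex_on_imp_above_tangent[where A=UNIV])
      show "(\<phi> has_real_derivative (g (x t + 0 *\<^sub>R h) \<bullet> h)) (at 0 within UNIV)"
        unfolding \<phi>_def by (rule line_deriv[OF grad])
    qed auto
    then have "f xstar - f (x t) \<ge> g (x t) \<bullet> (xstar - x t)" by (simp add: \<phi>_def h_def)
    moreover have "g (x t) \<bullet> v t \<le> g (x t) \<bullet> xstar" using vminh[OF opt(1)] .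
    ultimately show "g (x t) \<bullet> d t \<ge> (f (x t) - f xstar) / 1"
      by (simp add: dd inner_diff_right)
  qed
  have P2: "infinite (G_set gmax gam)" by (simp add: GU)
  show ?thesis by (rule conjI[OF P1 conjI[OF P2 conjI[OF allI[OF P3] P4]]])
qed

end
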